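(* Let $\eta:G\to\mathrm{U}(1)(\mathbb{F}_{p^2}/\mathbb{F}_p)$ be the composite of $\det:G\to\mathrm{U}(1)(\mathbb{Q}_{p^2}/\mathbb{Q}_p)$ with reduction modulo $p$. Then $\eta$ is surjective and $\ker(\eta)=G_0$.
   Context: $p$ odd prime; $\mathbb{Q}_{p^2}$ the unramified quadratic extension of $\mathbb{Q}_p$, integers $\mathbb{Z}_{p^2}$, automorphism $x\mapsto\bar x$. $G=\mathrm{U}(1,1)(\mathbb{Q}_{p^2}/\mathbb{Q}_p)=\{g\in\mathrm{GL}_2(\mathbb{Q}_{p^2}):g^*sg=s\}$, $s=\begin{pmatrix}0&1\\1&0\end{pmatrix}$; $G_S=G\cap\mathrm{SL}_2(\mathbb{Q}_{p^2})$. $\mathrm{U}(1)(\mathbb{Q}_{p^2}/\mathbb{Q}_p)=\{x:x\bar x=1\}$, $\mathrm{U}(1)(\mathbb{F}_{p^2}/\mathbb{F}_p)=\{a\in\mathbb{F}_{p^2}^\times:a^{p+1}=1\}$, $\mathrm{U}(1)_1=\mathrm{U}(1)(\mathbb{Q}_{p^2}/\mathbb{Q}_p)\cap(1+p\mathbb{Z}_{p^2})$. $G_0$ is the subgroup of $G$ generated by $G_S$ and the scalar matrices $a\cdot\mathrm{id}$ with $a\in\mathrm{U}(1)_1$. *)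

theory Defs
  imports "HOL-Analysis.Analysis"
begin

text \<open>
We model Q_{p^2} axiomatically: a field K of characteristic 0 with a discrete
valuation v (integer valued on nonzero elements), complete for v, for which
p is a uniformizer (v p = 1), with residue field (valuation ring modulo p)
isomorphic to a finite field F of cardinality p^2, together with a nontrivial
involutive field automorphism (the Galois conjugation).  These data characterize
Q_{p^2} (with its Frobenius) up to isomorphism.
\<close>

definition val_ring :: "('k::field \<Rightarrow> int) \<Rightarrow> 'k set" where
  "val_ring v = {x. x = 0 \<or> v x \<ge> 0}"

definition max_ideal :: "('k::field \<Rightarrow> int) \<Rightarrow> 'k set" where
  "max_ideal v = {x. x = 0 \<or> v x \<ge> 1}"

definition discrete_valuation :: "('k::field \<Rightarrow> int) \<Rightarrow> bool" where
  "discrete_valuation v \<longleftrightarrow>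
     (\<forall>x y. x \<noteq> 0 \<and> y \<noteq> 0 \<longrightarrow> v (x * y) = v x + v y) \<and>
     (\<forall>x y. x \<noteq> 0 \<and> y \<noteq> 0 \<and> x + y \<noteq> 0 \<longrightarrow> v (x + y) \<ge> min (v x) (v y))"

definition v_cauchy :: "('k::field \<Rightarrow> int) \<Rightarrow> (nat \<Rightarrow> 'k) \<Rightarrow> bool" where
  "v_cauchy v f \<longleftrightarrow> (\<forall>N::int. \<exists>M. \<forall>m\<ge>M. \<forall>n\<ge>M. f m = f n \<or> v (f m - f n) \<ge> N)"

definition v_converges_to :: "('k::field \<Rightarrow> int) \<Rightarrow> (nat \<Rightarrow> 'k) \<Rightarrow> 'k \<Rightarrow> bool" where
  "v_converges_to v f L \<longleftrightarrow> (\<forall>N::int. \<exists>M. \<forall>n\<ge>M. f n = L \<or> v (f n - L) \<ge> N)"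

definition v_complete :: "('k::field \<Rightarrow> int) \<Rightarrow> bool" where
  "v_complete v \<longleftrightarrow> (\<forall>f. v_cauchy v f \<longrightarrow> (\<exists>L. v_converges_to v f L))"

definition residue_map :: "('k::field \<Rightarrow> int) \<Rightarrow> ('k \<Rightarrow> 'f::field) \<Rightarrow> bool" where
  "residue_map v red \<longleftrightarrow>
     (\<forall>x\<in>val_ring v. \<forall>y\<in>val_ring v. red (x + y) = red x + red y \<and> red (x * y) = red x * red y) \<and>
     red 1 = 1 \<and> red ` val_ring v = UNIV \<and>
     (\<forall>x\<in>val_ring v. red x = 0 \<longleftrightarrow> x \<in> max_ideal v)"

definition field_involution :: "('k::field \<Rightarrow> 'k) \<Rightarrow> bool" where
  "field_involution c \<longleftrightarrow>
     (\<forall>x y. c (x + y) = c x + c y \<and> c (x * y) = c x * c y) \<and> c 1 = 1 \<and>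
     (\<forall>x. c (c x) = x) \<and> (\<exists>x. c x \<noteq> x)"

definition is_Qp2 :: "nat \<Rightarrow> ('k::field_char_0 \<Rightarrow> int) \<Rightarrow> ('k \<Rightarrow> 'k) \<Rightarrow> ('k \<Rightarrow> 'f::{field,finite}) \<Rightarrow> bool" where
  "is_Qp2 p v c red \<longleftrightarrow>
     discrete_valuation v \<and> v_complete v \<and> v (of_nat p) = 1 \<and>
     CARD('f) = p ^ 2 \<and> residue_map v red \<and> field_involution c"

definition conj_transpose :: "('k \<Rightarrow> 'k) \<Rightarrow> 'k^2^2 \<Rightarrow> 'k^2^2" where
  "conj_transpose c g = (\<chi> i j. c (g $ j $ i))"

definition s_form :: "'k::field^2^2" where
  "s_form = (\<chi> i j. if i = j then 0 else 1)"

definition U11 :: "('k::field \<Rightarrow> 'k) \<Rightarrow> ('k^2^2) set" where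
  "U11 c = {g. invertible g \<and> conj_transpose c g ** s_form ** g = s_form}"

definition SU11 :: "('k::field \<Rightarrow> 'k) \<Rightarrow> ('k^2^2) set" where
  "SU11 c = {g \<in> U11 c. det g = 1}"

definition U1_1 :: "('k::field \<Rightarrow> int) \<Rightarrow> ('k \<Rightarrow> 'k) \<Rightarrow> 'k set" where
  "U1_1 v c = {x. x * c x = 1 \<and> x - 1 \<in> max_ideal v}"

definition U1_res :: "nat \<Rightarrow> 'f::field set" where
  "U1_res p = {a. a \<noteq> 0 \<and> a ^ (p + 1) = 1}"

definition gen_subgroup :: "('k::field^2^2) set \<Rightarrow> ('k^2^2) set" where
  "gen_subgroup S = \<Inter> {H. S \<subseteq> H \<and> mat 1 \<in> H \<and>
       (\<forall>a\<in>H. \<forall>b\<in>H. a ** b \<in> H) \<and> (\<forall>a\<in>H. matrix_inv a \<in> H)}"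

definition G0 :: "('k::field \<Rightarrow> int) \<Rightarrow> ('k \<Rightarrow> 'k) \<Rightarrow> ('k^2^2) set" where
  "G0 v c = gen_subgroup (SU11 c \<union> {mat a | a. a \<in> U1_1 v c})"

end

theory Submission
  imports Defs "HOL-Library.Cardinality" "HOL-Computational_Algebra.Polynomial" "HOL-Computational_Algebra.Primes"
begin


lemma roots_bound:
  fixes a b :: "'a::field"
  assumes "n \<ge> 2"
  shows "finite {x. x^n = a + b*x} \<and> card {x. x^n = a + b*x} \<le> n"
proof -
  define q where "q = monom (1::'a) n + (- [:a,b:])"
  have dm: "degree (monom (1::'a) n) = n" by (simp add: degree_monom_eq)
  have "degree (- [:a,b:]) \<le> 1" by simp
  hence dq: "degree q = n" unfolding q_def using assms dm by (subst degree_add_eq_left) auto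
  hence qn: "q \<noteq> 0" using assms by auto
  have pq: "poly q x = x^n - (a + b*x)" for x by (simp add: q_def poly_monom)
  have "{x. x^n = a + b*x} = {x. poly q x = 0}" unfolding pq by simp
  thus ?thesis using poly_roots_finite[OF qn] card_poly_roots_bound[OF qn] dq by simp
qed

locale ff =
  fixes p :: nat and ty :: "'f::{field,finite} itself"
  assumes charp: "CHAR('f) = p" and prp: "prime p" and oddp: "odd p" and cardp: "CARD('f) = p^2"
begin

lemma p3: "p \<ge> 3"
proof -
  have "p \<ge> 2" using prime_ge_2_nat[OF prp] .
  moreover have "p \<noteq> 2" using oddp by auto
  ultimately show ?thesis by linarith
qed

lemma ofnat0: "(of_nat k :: 'f) = 0 \<longleftrightarrow> p dvd k" using of_nat_eq_0_iff_char_dvd charp by metis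

lemma fadd: "((x::'f) + y)^p = x^p + y^p"
  by (rule freshmans_dream) (simp_all add: charp prp)
lemma fmul: "((x::'f) * y)^p = x^p * y^p" by (simp add: power_mult_distrib)
lemma fneg: "(- (x::'f))^p = - (x^p)" using oddp by (simp add: power_minus_odd)
lemma fdiff: "((x::'f) - y)^p = x^p - y^p" using fadd[of x "-y"] fneg by simp
lemma two_nz: "(2::'f) \<noteq> 0"
proof -
  have "\<not> p dvd 2" using p3 by (simp add: nat_dvd_not_less)
  thus ?thesis using ofnat0[of 2] by simp
qed

lemma lagrange: "(x::'f)^(p^2) = x"
proof (cases "x = 0")
  case True thus ?thesis using p3 by simp
next
  case False
  define S where "S = (UNIV::'f set) - {0}"
  have fS: "finite S" by (simp add: S_def)
  have inj: "inj_on (\<lambda>y. x*y) S" using False by (simp add: inj_on_def)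
  have img: "(\<lambda>y. x*y) ` S = S"
  proof
    show "(\<lambda>y. x*y) ` S \<subseteq> S" using False by (auto simp: S_def)
    show "S \<subseteq> (\<lambda>y. x*y) ` S"
    proof
      fix y assume y: "y \<in> S"
      have "y = x*(y/x)" using False by simp
      moreover have "y/x \<in> S" using y False by (simp add: S_def)
      ultimately show "y \<in> (\<lambda>y. x*y) ` S" by blast
    qed
  qed
  have bij: "bij_betw (\<lambda>y. x*y) S S" using inj img by (simp add: bij_betw_def)
  have "prod (\<lambda>y. x*y) S = prod id S"
    using prod.reindex_bij_betw[OF bij, of id] by simp
  moreover have "prod (\<lambda>y. x*y) S = x^(card S) * prod id S"
    by (simp add: prod.distrib)
  moreover have "prod id S \<noteq> 0" using fS by (simp add: S_def)
  ultimately have "x^(card S) = 1" by simp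
  moreover have "card S = p^2 - 1" using cardp by (simp add: S_def card_Diff_singleton)
  ultimately have 1: "x^(p^2 - 1) = 1" by simp
  have "p^2 = Suc (p^2 - 1)" using p3 by simp
  hence "x^(p^2) = x^(p^2 - 1) * x" by (metis power_Suc2)
  thus ?thesis using 1 by simp
qed

definition P :: "'f set" where "P = {x. x^p = x}"

lemma P_add: "x \<in> P \<Longrightarrow> y \<in> P \<Longrightarrow> x + y \<in> P" by (simp add: P_def fadd)
lemma P_diff: "x \<in> P \<Longrightarrow> y \<in> P \<Longrightarrow> x - y \<in> P" by (simp add: P_def fdiff)
lemma P_mul: "x \<in> P \<Longrightarrow> y \<in> P \<Longrightarrow> x * y \<in> P" by (simp add: P_def fmul)
lemma P_div: "x \<in> P \<Longrightarrow> y \<in> P \<Longrightarrow> x / y \<in> P" by (simp add: P_def power_divide)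
lemma P_nat: "(of_nat k :: 'f) \<in> P"
  by (induction k) (simp_all add: P_def fadd prime_gt_0_nat[OF prp])

lemma inj_ofnat: "inj_on (of_nat :: nat \<Rightarrow> 'f) {0..<p}"
proof (rule inj_onI)
  fix i j assume ij: "i \<in> {0..<p}" "j \<in> {0..<p}" "(of_nat i :: 'f) = of_nat j"
  show "i = j"
  proof (rule ccontr)
    assume "i \<noteq> j"
    then consider "i < j" | "j < i" by linarith
    thus False
    proof cases
      case 1 hence "(of_nat (j - i) :: 'f) = 0" using ij by (simp add: of_nat_diff)
      hence "p dvd (j - i)" using ofnat0 by blast
      thus False using 1 ij by (simp add: nat_dvd_not_less)
    next
      case 2 hence "(of_nat (i - j) :: 'f) = 0" using ij by (simp add: of_nat_diff)
      hence "p dvd (i - j)" using ofnat0 by blast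
      thus False using 2 ij by (simp add: nat_dvd_not_less)
    qed
  qed
qed

lemma P_eq: "P = of_nat ` {0..<p}" and cardP: "card P = p"
proof -
  have sub: "of_nat ` {0..<p} \<subseteq> P" using P_nat by auto
  have cP: "finite P" "card P \<le> p" using roots_bound[of p "0::'f" 1] p3 by (simp_all add: P_def)
  have c: "card (of_nat ` {0..<p} :: 'f set) = p" using card_image[OF inj_ofnat] by simp
  show "P = of_nat ` {0..<p}" using card_subset_eq[OF cP(1) sub] c cP(2) card_mono[OF cP(1) sub] by simp
  thus "card P = p" using c by simp
qed


lemma P_ne_UNIV: "P \<noteq> UNIV"
proof
  assume "P = UNIV"
  hence "p = p^2" using cardP cardp by simp
  thus False using p3 by (simp add: power2_eq_square)
qed

lemma pp: "((x::'f)^p)^p = x" using lagrange[of x] by (simp add: power_mult[symmetric] power2_eq_square)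

lemma exists_omega: "\<exists>w::'f. w \<noteq> 0 \<and> w^p = - w"
proof -
  obtain a :: 'f where a: "a \<notin> P" using P_ne_UNIV by blast
  define w where "w = a - a^p"
  have "w^p = a^p - a" unfolding w_def by (simp add: fdiff pp)
  hence "w^p = - w" by (simp add: w_def)
  moreover have "w \<noteq> 0" using a by (simp add: w_def P_def)
  ultimately show ?thesis by blast
qed

lemma omega_notP: assumes "(w::'f) \<noteq> 0" "w^p = - w" shows "w \<notin> P"
proof
  assume "w \<in> P"
  hence "w = - w" using assms by (simp add: P_def)
  hence "2 * w = 0" by simp
  thus False using assms two_nz by simp
qed

lemma omega_sq: assumes "(w::'f)^p = - w" shows "w^2 \<in> P"
  using assms by (simp add: P_def power_mult[symmetric] mult.commute power_mult)

lemma span: assumes w: "(w::'f) \<notin> P" shows "\<exists>a\<in>P. \<exists>b\<in>P. x = a + b*w"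
proof -
  define f where "f = (\<lambda>(a,b). a + b*w)"
  have inj: "inj_on f (P \<times> P)"
  proof (rule inj_onI, clarify)
    fix a b a' b' assume h: "a \<in> P" "b \<in> P" "a' \<in> P" "b' \<in> P" "f (a,b) = f (a',b')"
    hence e: "a + b*w = a' + b'*w" by (simp add: f_def)
    show "a = a' \<and> b = b'"
    proof (cases "b = b'")
      case True thus ?thesis using e by simp
    next
      case False
      have "(b' - b)*w = a - a'" using e by (simp add: algebra_simps)
      hence "w = (a - a')/(b' - b)" using False by (simp add: field_simps)
      hence "w \<in> P" using h by (simp add: P_div P_diff)
      thus ?thesis using w by simp
    qed
  qed
  have fin: "finite P" by simp
  have "card (f ` (P \<times> P)) = p^2" using card_image[OF inj] cardP by (simp add: card_cartesian_product power2_eq_square)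
  hence "f ` (P \<times> P) = UNIV" using cardp card_subset_eq[of UNIV "f ` (P \<times> P)"] by simp
  hence "x \<in> f ` (P \<times> P)" by simp
  thus ?thesis by (auto simp: f_def)
qed

lemma pow_surj: "(\<lambda>b::'f. b^(p-1)) ` (UNIV - {0}) = {a. a \<noteq> 0 \<and> a^(p+1) = 1}"
proof -
  define g where "g = (\<lambda>b::'f. b^(p-1))"
  define S where "S = (UNIV::'f set) - {0}"
  define U where "U = {a::'f. a \<noteq> 0 \<and> a^(p+1) = 1}"
  define T where "T = g ` S"
  have pe: "(p-1)*(p+1) = p^2 - 1" using p3 by (simp add: power2_eq_square algebra_simps)
  have TU: "T \<subseteq> U"
  proof
    fix t assume "t \<in> T"
    then obtain b where b: "b \<noteq> 0" "t = b^(p-1)" by (auto simp: T_def g_def S_def)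
    have "b^(p^2) = b" by (rule lagrange)
    moreover have "p^2 = Suc (p^2 - 1)" using p3 by simp
    ultimately have "b^(p^2-1) * b = b" by (metis power_Suc2)
    hence "b^(p^2-1) = 1" using b by simp
    moreover have "t^(p+1) = b^((p-1)*(p+1))" using b by (simp only: power_mult)
    ultimately have "t^(p+1) = 1" using pe by simp
    thus "t \<in> U" using b by (simp add: U_def)
  qed
  have rb: "finite {x::'f. x^(p+1) = 1 + 0*x}" "card {x::'f. x^(p+1) = 1 + 0*x} \<le> p+1"
    using roots_bound[of "p+1" "1::'f" 0] p3 by auto
  have sub: "U \<subseteq> {x::'f. x^(p+1) = 1 + 0*x}" by (auto simp: U_def)
  have cU: "finite U" "card U \<le> p+1"
    using finite_subset[OF sub rb(1)] card_mono[OF rb(1) sub] rb(2) by auto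
  have fib: "card {b \<in> S. g b = t} \<le> p - 1" for t
  proof -
    have "card {x::'f. x^(p-1) = t + 0*x} \<le> p-1" using roots_bound[of "p-1" t 0] p3 by simp
    moreover have "{b \<in> S. g b = t} \<subseteq> {x::'f. x^(p-1) = t + 0*x}" by (auto simp: g_def)
    ultimately show ?thesis using card_mono[OF finite] le_trans by blast
  qed
  have "S = (\<Union>t\<in>T. {b \<in> S. g b = t})" by (auto simp: T_def)
  hence "card S \<le> (\<Sum>t\<in>T. card {b \<in> S. g b = t})" using card_UN_le[of T "\<lambda>t. {b \<in> S. g b = t}"] by simp
  also have "\<dots> \<le> card T * (p - 1)" using sum_bounded_above[of T "\<lambda>t. card {b \<in> S. g b = t}" "p-1"] fib by simp
  finally have "(p-1)*(p+1) \<le> card T * (p-1)" using pe cardp by (simp add: S_def card_Diff_singleton)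
  hence h: "(p+1)*(p-1) \<le> card T * (p-1)" by (simp only: mult.commute)
  have "0 < p - 1" using p3 by simp
  hence "p + 1 \<le> card T" using h mult_le_cancel2[of "p+1" "p-1" "card T"] by blast
  hence "T = U" using card_subset_eq[OF cU(1) TU] cU(2) card_mono[OF cU(1) TU] by simp
  thus ?thesis by (simp add: T_def U_def g_def S_def)
qed

end



locale qp2 =
  fixes p :: nat and v :: "'k::field_char_0 \<Rightarrow> int" and c :: "'k \<Rightarrow> 'k"
    and red :: "'k \<Rightarrow> 'f::{field,finite}"
  assumes pr: "prime p" and od: "odd p" and Q: "is_Qp2 p v c red"
begin

abbreviation R where "R \<equiv> val_ring v"
abbreviation M where "M \<equiv> max_ideal v"

lemma dv: "discrete_valuation v" and vc: "v_complete v" and vp: "v (of_nat p) = 1"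
  and cardF: "CARD('f) = p^2" and rm: "residue_map v red" and fi: "field_involution c"
  using Q unfolding is_Qp2_def by auto

lemma vmul: "x \<noteq> 0 \<Longrightarrow> y \<noteq> 0 \<Longrightarrow> v (x*y) = v x + v y"
  using dv unfolding discrete_valuation_def by blast
lemma vadd: "x \<noteq> 0 \<Longrightarrow> y \<noteq> 0 \<Longrightarrow> x + y \<noteq> 0 \<Longrightarrow> v (x+y) \<ge> min (v x) (v y)"
  using dv unfolding discrete_valuation_def by blast
lemma v1[simp]: "v 1 = 0" using vmul[of 1 1] by simp
lemma vm1[simp]: "v (-1) = 0" using vmul[of "-1" "-1"] by simp
lemma vneg[simp]: "v (-x) = v x"
proof (cases "x = 0")
  case False thus ?thesis using vmul[of "-1" x] by simp
qed simp
lemma vinv: "x \<noteq> 0 \<Longrightarrow> v (inverse x) = - v x"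
  using vmul[of x "inverse x"] by simp
lemma vpow: "x \<noteq> 0 \<Longrightarrow> v (x ^ n) = int n * v x"
  by (induction n) (auto simp: vmul algebra_simps)
lemma p_pos[simp]: "0 < p" using pr by (simp add: prime_gt_0_nat)
lemma p_nz[simp]: "(of_nat p :: 'k) \<noteq> 0" using pr by (simp add: prime_gt_0_nat)
lemma vpn: "v ((of_nat p :: 'k) ^ n) = int n" using vpow[OF p_nz, of n] vp by simp

lemma vstrict: assumes "x \<noteq> 0" "y \<noteq> 0" "v x < v y" shows "x + y \<noteq> 0" "v (x + y) = v x"
proof -
  show xy: "x + y \<noteq> 0" proof assume "x + y = 0" hence "y = -x" by (simp add: add_eq_0_iff2)
    thus False using assms by simp qed
  have "v (x+y) \<ge> min (v x) (v y)" using vadd assms xy by blast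
  moreover have "v x \<ge> min (v (x+y)) (v (-y))" using vadd[of "x+y" "-y"] assms xy by simp
  ultimately show "v (x + y) = v x" using assms by auto
qed

definition pw :: "int \<Rightarrow> 'k \<Rightarrow> bool" where "pw n x \<longleftrightarrow> x = 0 \<or> v x \<ge> n"

lemma pw0[simp]: "pw n 0" by (simp add: pw_def)
lemma pw_neg[simp]: "pw n (-x) = pw n x" by (simp add: pw_def)
lemma pw_add: assumes "pw n x" "pw n y" shows "pw n (x + y)"
proof (cases "x = 0 \<or> y = 0 \<or> x + y = 0")
  case True thus ?thesis using assms by auto
next
  case False
  hence "v (x+y) \<ge> min (v x) (v y)" using vadd by blast
  moreover have "v x \<ge> n" "v y \<ge> n" using assms False by (auto simp: pw_def)
  ultimately have "v (x+y) \<ge> n" by (simp add: min_def split: if_splits)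
  thus ?thesis by (simp add: pw_def)
qed
lemma pw_diff: "pw n x \<Longrightarrow> pw n y \<Longrightarrow> pw n (x - y)"
  using pw_add[of n x "-y"] by simp
lemma pw_mul: "pw n x \<Longrightarrow> pw m y \<Longrightarrow> pw (n + m) (x * y)"
  unfolding pw_def by (cases "x=0"; cases "y=0") (auto simp: vmul)
lemma pw_mono: "pw n x \<Longrightarrow> m \<le> n \<Longrightarrow> pw m x"
  unfolding pw_def by auto
lemma pw_all: assumes "\<And>n. pw n x" shows "x = 0"
proof -
  have "pw (v x + 1) x" by fact
  thus ?thesis by (simp add: pw_def)
qed
lemma R_pw: "x \<in> R \<longleftrightarrow> pw 0 x" by (simp add: val_ring_def pw_def)
lemma M_pw: "x \<in> M \<longleftrightarrow> pw 1 x" by (simp add: max_ideal_def pw_def)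
lemma pw_mulR: "pw n x \<Longrightarrow> y \<in> R \<Longrightarrow> pw n (x * y)"
  using pw_mul[of n x 0 y] by (simp add: R_pw)
lemma pw_pow: "pw (int n) ((of_nat p :: 'k) ^ n)" by (simp add: pw_def vpn)

lemma R_add: "x \<in> R \<Longrightarrow> y \<in> R \<Longrightarrow> x + y \<in> R" by (simp add: R_pw pw_add)
lemma R_diff: "x \<in> R \<Longrightarrow> y \<in> R \<Longrightarrow> x - y \<in> R" by (simp add: R_pw pw_diff)
lemma R_mul: "x \<in> R \<Longrightarrow> y \<in> R \<Longrightarrow> x * y \<in> R" by (simp add: R_pw pw_mulR)
lemma R_neg: "x \<in> R \<Longrightarrow> -x \<in> R" by (simp add: R_pw)
lemma R_0[simp]: "0 \<in> R" and R_1[simp]: "1 \<in> R" by (auto simp: val_ring_def)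
lemma R_nat[simp]: "of_nat n \<in> R" by (induction n) (auto intro: R_add)
lemma R_int[simp]: "of_int n \<in> R"
  by (cases n rule: int_cases) (auto intro: R_neg simp del: of_nat_Suc)
lemma R_two[simp]: "(2::'k) \<in> R" using R_nat[of 2] by simp
lemma R_pow: "x \<in> R \<Longrightarrow> x ^ n \<in> R" by (induction n) (auto intro: R_mul)
lemma M_R: "x \<in> M \<Longrightarrow> x \<in> R" by (simp add: R_pw M_pw pw_mono)
lemma M_add: "x \<in> M \<Longrightarrow> y \<in> M \<Longrightarrow> x + y \<in> M" by (simp add: M_pw pw_add)
lemma M_diff: "x \<in> M \<Longrightarrow> y \<in> M \<Longrightarrow> x - y \<in> M" by (simp add: M_pw pw_diff)
lemma M_mul: "x \<in> M \<Longrightarrow> y \<in> R \<Longrightarrow> x * y \<in> M" by (simp add: M_pw pw_mulR)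
lemma p_M: "(of_nat p :: 'k) \<in> M" by (simp add: M_pw pw_def vp)

lemma unit_R: "x \<in> R \<Longrightarrow> x \<notin> M \<Longrightarrow> v x = 0 \<and> x \<noteq> 0 \<and> inverse x \<in> R"
  by (auto simp: val_ring_def max_ideal_def vinv)

lemma red_add: "x \<in> R \<Longrightarrow> y \<in> R \<Longrightarrow> red (x + y) = red x + red y"
  and red_mul: "x \<in> R \<Longrightarrow> y \<in> R \<Longrightarrow> red (x * y) = red x * red y"
  and red1[simp]: "red 1 = 1" and red_surj: "red ` R = UNIV"
  and red_0: "x \<in> R \<Longrightarrow> red x = 0 \<longleftrightarrow> x \<in> M"
  using rm unfolding residue_map_def by auto
lemma red0[simp]: "red 0 = 0"
proof -
  have "red 0 = red 0 + red 0" using red_add[of 0 0] by simp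
  thus ?thesis by (metis add_cancel_right_right)
qed
lemma red_neg: "x \<in> R \<Longrightarrow> red (-x) = - red x"
  using red_add[of x "-x"] R_neg[of x] by (simp add: eq_neg_iff_add_eq_0 add.commute)
lemma red_diff: "x \<in> R \<Longrightarrow> y \<in> R \<Longrightarrow> red (x - y) = red x - red y"
  using red_add[of x "-y"] by (simp add: R_neg red_neg)
lemma red_eq: "x \<in> R \<Longrightarrow> y \<in> R \<Longrightarrow> red x = red y \<longleftrightarrow> x - y \<in> M"
  using red_0[of "x-y"] by (simp add: red_diff R_diff)
lemma red_nat[simp]: "red (of_nat n) = of_nat n"
  by (induction n) (simp_all add: red_add)
lemma red_pow: "x \<in> R \<Longrightarrow> red (x ^ n) = red x ^ n"
  by (induction n) (simp_all add: red_mul R_pow)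
lemma red_inv: "x \<in> R \<Longrightarrow> x \<notin> M \<Longrightarrow> red (inverse x) = inverse (red x)"
proof -
  assume h: "x \<in> R" "x \<notin> M"
  have "red x * red (inverse x) = 1" using red_mul[of x "inverse x"] unit_R[OF h] h by simp
  thus ?thesis using inverse_unique by metis
qed
lemma charF: "(of_nat p :: 'f) = 0" using red_nat[of p] red_0[of "of_nat p"] p_M by simp
lemma two_F: "(2 :: 'f) \<noteq> 0"
proof
  assume h: "(2::'f) = 0"
  obtain k where k: "p = 2*k+1" using od oddE by blast
  have "(of_nat p::'f) = of_nat k * 2 + 1" by (simp add: k)
  thus False using h charF by simp
qed
lemma two_notM: "(2::'k) \<notin> M" using red_0[of 2] two_F red_nat[of 2] R_nat[of 2] by simp

lemma hensel:
  assumes z: "z \<in> R" and y0: "y0 \<in> R" "y0 \<notin> M" and e0: "pw 1 (y0^2 - z)"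
  shows "\<exists>y. y^2 = z \<and> pw 1 (y - y0)"
proof -
  have "red (2*y0) \<noteq> 0" using y0 two_F red_mul[of 2 y0] red_nat[of 2] red_0[of y0] by simp
  hence t: "2*y0 \<in> R" "2*y0 \<notin> M" using y0 R_mul[of 2 y0] red_0[of "2*y0"] by auto
  define u where "u = inverse (2*y0)"
  have uR: "u \<in> R" using unit_R[OF t] unfolding u_def by blast
  have u1: "2*y0*u = 1" using unit_R[OF t] unfolding u_def by (metis right_inverse)
  define f where "f = rec_nat y0 (\<lambda>n y. y - (y^2 - z)*u)"
  have f0: "f 0 = y0" and fS: "\<And>n. f (Suc n) = f n - (f n^2 - z)*u" by (simp_all add: f_def)
  have inv: "f n \<in> R \<and> pw 1 (f n - y0) \<and> pw (int n + 1) (f n^2 - z)" for n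
  proof (induction n)
    case 0 thus ?case using y0 e0 by (simp add: f0)
  next
    case (Suc n)
    define y where "y = f n"
    define e where "e = y^2 - z"
    have yR: "y \<in> R" and y1: "pw 1 (y - y0)" and en: "pw (int n + 1) e" using Suc by (auto simp: y_def e_def)
    have e1: "pw 1 e" using pw_mono[OF en, of 1] by simp
    have eu: "pw 1 (e*u)" using pw_mulR[OF e1 uR] .
    have a: "f (Suc n) = y - e*u" by (simp add: fS y_def e_def)
    have "e*u \<in> R" using eu M_R M_pw by blast
    hence "f (Suc n) \<in> R" unfolding a using yR by (simp add: R_diff)
    moreover have "pw 1 (f (Suc n) - y0)"
    proof -
      have eq: "f (Suc n) - y0 = (y - y0) - e*u" by (simp add: a)
      show ?thesis unfolding eq by (rule pw_diff[OF y1 eu])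
    qed
    moreover have "pw (int (Suc n) + 1) (f (Suc n)^2 - z)"
    proof -
      have "f (Suc n)^2 - z = e*(1 - 2*y*u) + (e*u)*(e*u)"
        by (simp add: a e_def power2_eq_square algebra_simps)
      also have "1 - 2*y*u = (y0 - y)*(2*u)" using u1 by (simp add: algebra_simps)
      finally have b: "f (Suc n)^2 - z = e*((y0 - y)*(2*u)) + (e*u)*(e*u)" .
      have "pw 1 ((y0 - y)*(2*u))" using pw_mulR[of 1 "y0 - y" "2*u"] y1 uR
        by (metis R_mul R_nat minus_diff_eq of_nat_numeral pw_neg)
      hence 1: "pw (int n + 2) (e*((y0 - y)*(2*u)))" using pw_mul[OF en, of 1] by (simp add: add.assoc)
      have "pw (int n + 1 + 1) ((e*u)*(e*u))" using pw_mul[OF pw_mulR[OF en uR] eu] by simp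
      hence 2: "pw (int n + 2) ((e*u)*(e*u))" by (simp add: add.assoc)
      have "int (Suc n) + 1 = int n + 2" by simp
      thus ?thesis unfolding b using pw_add[OF 1 2] by metis
    qed
    ultimately show ?case by simp
  qed
  have step: "pw (int n + 1) (f (Suc n) - f n)" for n
  proof -
    have "f (Suc n) - f n = - ((f n^2 - z)*u)" by (simp add: fS)
    thus ?thesis using pw_mulR[of "int n + 1" "f n^2 - z" u] inv[of n] uR by simp
  qed
  have cau: "pw (int n + 1) (f (n + k) - f n)" for n k
  proof (induction k)
    case (Suc k)
    have eq: "f (n + Suc k) - f n = (f (Suc (n+k)) - f (n+k)) + (f (n+k) - f n)" by simp
    have "pw (int n + 1) (f (Suc (n+k)) - f (n+k))" using pw_mono[OF step[of "n+k"], of "int n + 1"] by simp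
    thus ?case unfolding eq using pw_add[OF _ Suc] by blast
  qed simp
  have cau2: "pw (int n + 1) (f m - f n)" if "m \<ge> n" for m n
    using cau[of n "m - n"] that by simp
  have "v_cauchy v f"
    unfolding v_cauchy_def
  proof
    fix N :: int
    show "\<exists>K. \<forall>m\<ge>K. \<forall>n\<ge>K. f m = f n \<or> N \<le> v (f m - f n)"
    proof (intro exI allI impI)
      fix m n assume mn: "nat N \<le> m" "nat N \<le> n"
      have "f m - f n = (f m - f (nat N)) - (f n - f (nat N))" by simp
      hence "pw (int (nat N) + 1) (f m - f n)" using pw_diff[OF cau2[OF mn(1)] cau2[OF mn(2)]] by simp
      hence "pw N (f m - f n)" using pw_mono[of "int (nat N) + 1" _ N] by simp
      thus "f m = f n \<or> N \<le> v (f m - f n)" by (simp add: pw_def)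
    qed
  qed
  then obtain L where L: "v_converges_to v f L" using vc unfolding v_complete_def by blast
  have conv: "\<exists>K. \<forall>n\<ge>K. pw N (f n - L)" for N
    using L unfolding v_converges_to_def pw_def by simp
  have "pw N (L^2 - z)" for N
  proof -
    obtain K where K: "\<forall>n\<ge>K. pw (max N 0) (f n - L)" using conv by blast
    define n where "n = max K (nat N)"
    have "pw (max N 0) (f n - L)" using K n_def by simp
    hence 1: "pw (max N 0) (L - f n)" using pw_neg[of _ "f n - L"] by simp
    have fR: "f n \<in> R" using inv by blast
    have "L + f n = (L - f n) + 2 * f n" by simp
    have "L - f n \<in> R" using 1 pw_mono[of "max N 0" _ 0] R_pw by simp
    moreover have "2 * f n \<in> R" using fR R_mul[of 2 "f n"] by simp
    ultimately have 2: "L + f n \<in> R" using R_add \<open>L + f n = (L - f n) + 2 * f n\<close> by metis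
    have 3: "pw N ((L - f n)*(L + f n))" using pw_mulR[OF 1 2] pw_mono[of "max N 0" _ N] by simp
    have 4: "pw N (f n^2 - z)" using inv[of n] pw_mono[of "int n + 1" _ N] n_def by simp
    have eq: "L^2 - z = (L - f n)*(L + f n) + (f n^2 - z)" by (simp add: power2_eq_square algebra_simps)
    show ?thesis unfolding eq by (rule pw_add[OF 3 4])
  qed
  hence "L^2 = z" using pw_all[of "L^2 - z"] by simp
  moreover have "pw 1 (L - y0)"
  proof -
    obtain K where K: "\<forall>n\<ge>K. pw 1 (f n - L)" using conv by blast
    have "L - y0 = (f K - y0) - (f K - L)" by simp
    thus ?thesis using pw_diff[of 1 "f K - y0" "f K - L"] K inv by auto
  qed
  ultimately show ?thesis by blast
qed


lemma CHARp: "CHAR('f) = p"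
proof -
  have d: "CHAR('f) dvd p" using charF of_nat_eq_0_iff_char_dvd by blast
  have n1: "CHAR('f) \<noteq> 1" using of_nat_CHAR[where 'a='f] by auto
  show ?thesis using d pr n1 unfolding prime_nat_iff by blast
qed

sublocale F: ff p "TYPE('f)"
  using CHARp pr od cardF by unfold_locales auto

lemma c_add: "c (x + y) = c x + c y" and c_mul: "c (x * y) = c x * c y"
  and c1[simp]: "c 1 = 1" and cc[simp]: "c (c x) = x" and c_nontriv: "\<exists>x. c x \<noteq> x"
  using fi unfolding field_involution_def by auto
lemma c0[simp]: "c 0 = 0"
proof -
  have "c 0 = c 0 + c 0" using c_add[of 0 0] by simp
  thus ?thesis by (metis add_cancel_right_right)
qed
lemma c_neg: "c (- x) = - c x" using c_add[of x "-x"] by (simp add: eq_neg_iff_add_eq_0 add.commute)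
lemma c_diff: "c (x - y) = c x - c y" using c_add[of x "-y"] by (simp add: c_neg)
lemma c_nat[simp]: "c (of_nat n) = of_nat n" by (induction n) (simp_all add: c_add)
lemma c_eq0[simp]: "c x = 0 \<longleftrightarrow> x = 0" by (metis c0 cc)
lemma c_inv: "c (inverse x) = inverse (c x)"
proof (cases "x = 0")
  case False
  have "c x * c (inverse x) = 1" using c_mul[of x "inverse x"] False by simp
  thus ?thesis using inverse_unique by metis
qed simp
lemma c_pow: "c (x ^ n) = c x ^ n" by (induction n) (simp_all add: c_mul)

lemma R_char: "x \<in> R \<longleftrightarrow> (\<exists>y. y^2 = 1 + of_nat p * x^2)"
proof
  assume x: "x \<in> R"
  have "1 \<notin> M" using red_0[of 1] by simp
  moreover have "pw 1 (1^2 - (1 + of_nat p * x^2))"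
    using pw_mulR[of 1 "of_nat p" "x^2"] p_M R_pow[OF x, of 2] by (simp add: M_pw)
  moreover have "1 + of_nat p * x^2 \<in> R" using x by (simp add: R_add R_mul R_pow)
  ultimately show "\<exists>y. y^2 = 1 + of_nat p * x^2" using hensel[of "1 + of_nat p * x^2" 1] by auto
next
  assume "\<exists>y. y^2 = 1 + of_nat p * x^2"
  then obtain y where y: "y^2 = 1 + of_nat p * x^2" by blast
  show "x \<in> R"
  proof (rule ccontr)
    assume "x \<notin> R"
    hence x: "x \<noteq> 0" "v x < 0" by (auto simp: val_ring_def)
    define a where "a = of_nat p * x^2"
    have a0: "a \<noteq> 0" using x by (simp add: a_def)
    have va: "v a = 1 + 2 * v x" using x by (simp add: a_def vmul vp vpow)
    have "v (a + 1) = v a" using vstrict[of a 1] a0 va x by simp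
    moreover have "y \<noteq> 0" using vstrict(1)[of a 1] a0 va x y by (auto simp: a_def add.commute)
    hence "v (y^2) = 2 * v y" by (simp add: vpow)
    ultimately have "2 * v y = 1 + 2 * v x" using y va by (simp add: a_def add.commute)
    thus False by presburger
  qed
qed

lemma c_R: "x \<in> R \<Longrightarrow> c x \<in> R"
proof -
  assume "x \<in> R"
  then obtain y where "y^2 = 1 + of_nat p * x^2" using R_char by blast
  hence "(c y)^2 = 1 + of_nat p * (c x)^2" by (metis c_add c_mul c_nat c_pow c1)
  thus "c x \<in> R" using R_char by blast
qed
lemma c_R_iff: "c x \<in> R \<longleftrightarrow> x \<in> R" by (metis c_R cc)

lemma v_c: assumes x: "x \<noteq> 0" shows "v (c x) = v x"
proof -
  have key: "0 \<le> v z \<longleftrightarrow> 0 \<le> v (c z)" if "z \<noteq> 0" for z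
    using c_R_iff[of z] that by (auto simp: val_ring_def)
  define q :: "nat \<Rightarrow> 'k" where "q k = of_nat p ^ k" for k
  have q0: "q k \<noteq> 0" and vq: "v (q k) = int k" and cq: "c (q k) = q k" for k
    by (simp_all add: q_def vpn c_pow)
  have up: "0 \<le> v x + int k \<longleftrightarrow> 0 \<le> v (c x) + int k" for k
    using key[of "x * q k"] x q0 vq cq by (simp add: vmul c_mul)
  have dn: "0 \<le> v x - int k \<longleftrightarrow> 0 \<le> v (c x) - int k" for k
    using key[of "x * inverse (q k)"] x q0 vq cq by (simp add: vmul c_mul c_inv vinv)
  show ?thesis
  proof (cases "v x \<ge> 0")
    case True
    have "v (c x) \<ge> v x" using dn[of "nat (v x)"] True by simp
    moreover have "v (c x) \<le> v x" using dn[of "nat (v x) + 1"] True by simp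
    ultimately show ?thesis by simp
  next
    case False
    have "v (c x) \<ge> v x" using up[of "nat (- v x)"] False by simp
    moreover have "v (c x) \<le> v x" using up[of "nat (- v x) - 1"] False by simp
    ultimately show ?thesis by simp
  qed
qed
lemma pw_c: "pw n (c x) \<longleftrightarrow> pw n x" unfolding pw_def using v_c by force
lemma M_c: "c x \<in> M \<longleftrightarrow> x \<in> M" by (simp add: M_pw pw_c)


lemma pw_nat_all: assumes "\<And>n::nat. pw (int n) x" shows "x = 0"
proof (rule pw_all)
  fix n :: int
  show "pw n x" using assms[of "nat n"] pw_mono[of "int (nat n)" x n] by simp
qed

lemma lift_sqrt: "\<exists>Y w k. Y \<in> R \<and> Y^2 = of_nat k \<and> red Y = w \<and> w \<noteq> 0 \<and> w^p = - w"
proof -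
  obtain w :: 'f where w: "w \<noteq> 0" "w^p = - w" using F.exists_omega by blast
  have "w^2 \<in> F.P" using F.omega_sq[OF w(2)] .
  then obtain k where k: "w^2 = of_nat k" using F.P_eq by auto
  obtain y0 where y0: "y0 \<in> R" "red y0 = w" using red_surj by (metis UNIV_I imageE)
  have y0M: "y0 \<notin> M" using y0 w red_0 by auto
  have "red (y0^2) = red (of_nat k)" using y0 k by (simp add: red_pow)
  hence "y0^2 - of_nat k \<in> M" using red_eq[of "y0^2" "of_nat k"] y0 by (simp add: R_pow)
  then obtain Y where Y: "Y^2 = of_nat k" "pw 1 (Y - y0)" using hensel[of "of_nat k" y0] y0 y0M M_pw by auto
  have "Y - y0 \<in> M" using Y M_pw by simp
  hence YR: "Y \<in> R" using y0 M_R R_add[of "Y - y0" y0] by simp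
  have "red Y = w" using red_eq[OF YR y0(1)] \<open>Y - y0 \<in> M\<close> y0 by simp
  thus ?thesis using Y YR w by blast
qed

lemma approx:
  assumes Y: "Y \<in> R" "c Y = Y" "red Y = w" "w \<notin> F.P" and x: "x \<in> R"
  shows "\<exists>s. s \<in> R \<and> c s = s \<and> pw (int n) (x - s)"
proof (induction n)
  case 0 thus ?case using x by (auto simp: R_pw intro!: exI[of _ 0])
next
  case (Suc n)
  then obtain s where s: "s \<in> R" "c s = s" "pw (int n) (x - s)" by blast
  define q :: 'k where "q = of_nat p ^ n"
  have q0: "q \<noteq> 0" and vq: "v q = int n" and cq: "c q = q" and qR: "q \<in> R"
    by (simp_all add: q_def vpn c_pow R_pow)
  define r where "r = (x - s) / q"
  have xr: "x - s = q * r" using q0 by (simp add: r_def)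
  have rR: "r \<in> R"
  proof (cases "x - s = 0")
    case True thus ?thesis by (simp add: r_def)
  next
    case False
    hence "v (x - s) \<ge> int n" using s by (simp add: pw_def)
    moreover have "v r = v (x - s) - int n" using False q0 vq by (simp add: r_def divide_inverse vmul vinv)
    ultimately show ?thesis by (simp add: val_ring_def)
  qed
  obtain a b where ab: "a \<in> F.P" "b \<in> F.P" "red r = a + b * w" using F.span[OF Y(4)] by blast
  obtain i j where ij: "a = of_nat i" "b = of_nat j" using ab F.P_eq by auto
  define t where "t = of_nat i + of_nat j * Y"
  have tR: "t \<in> R" using Y by (simp add: t_def R_add R_mul)
  have ct: "c t = t" using Y by (simp add: t_def c_add c_mul)
  have "red t = red r" using Y ab ij by (simp add: t_def red_add red_mul R_mul)
  hence "r - t \<in> M" using red_eq[OF rR tR] by simp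
  hence rt: "pw 1 (r - t)" by (simp add: M_pw)
  define s' where "s' = s + q * t"
  have "s' \<in> R" using s tR qR by (simp add: s'_def R_add R_mul)
  moreover have "c s' = s'" using s ct cq by (simp add: s'_def c_add c_mul)
  moreover have "x - s' = q * (r - t)" using xr by (simp add: s'_def algebra_simps)
  hence "pw (int (Suc n)) (x - s')" using pw_mul[OF _ rt, of "int n" q] vq by (simp add: pw_def add.commute)
  ultimately show ?case by blast
qed

lemma cY_neg: assumes Y: "Y \<in> R" "Y^2 = of_nat k" "red Y = w" "w \<noteq> 0" "w^p = - w"
  shows "c Y = - Y"
proof -
  have "(c Y)^2 = Y^2" using Y by (simp add: c_pow[symmetric])
  hence alt: "c Y = Y \<or> c Y = - Y" by (simp add: power2_eq_iff)
  have wP: "w \<notin> F.P" using F.omega_notP[OF Y(4,5)] .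
  have False if cy: "c Y = Y"
  proof -
    have fixR: "c x = x" if x: "x \<in> R" for x
    proof -
      have "pw (int n) (c x - x)" for n
      proof -
        obtain s where s: "s \<in> R" "c s = s" "pw (int n) (x - s)" using approx[OF Y(1) cy Y(3) wP x] by blast
        have "c x - x = c (x - s) - (x - s)" using s by (simp add: c_diff)
        moreover have "pw (int n) (c (x - s))" using s pw_c by simp
        ultimately show ?thesis using pw_diff s by metis
      qed
      thus ?thesis using pw_nat_all[of "c x - x"] by simp
    qed
    have "c x = x" for x
    proof (cases "x \<in> R")
      case True thus ?thesis using fixR by blast
    next
      case False
      hence "x \<noteq> 0" "v x < 0" by (auto simp: val_ring_def)
      hence "inverse x \<in> R" by (simp add: val_ring_def vinv)
      hence "c (inverse x) = inverse x" using fixR by blast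
      thus ?thesis by (simp add: c_inv)
    qed
    thus False using c_nontriv by blast
  qed
  thus ?thesis using alt by blast
qed

lemma frob: assumes x: "x \<in> R" shows "red (c x) = red x ^ p"
proof -
  obtain Y w k where Y: "Y \<in> R" "Y^2 = of_nat k" "red Y = w" "w \<noteq> 0" "w^p = - w" using lift_sqrt by blast
  have cY: "c Y = - Y" using cY_neg[OF Y] .
  have wP: "w \<notin> F.P" using F.omega_notP[OF Y(4,5)] .
  obtain a b where ab: "a \<in> F.P" "b \<in> F.P" "red x = a + b * w" using F.span[OF wP] by blast
  obtain i j where ij: "a = of_nat i" "b = of_nat j" using ab F.P_eq by auto
  define t where "t = of_nat i + of_nat j * Y"
  have tR: "t \<in> R" using Y by (simp add: t_def R_add R_mul)
  have "red t = red x" using Y ab ij by (simp add: t_def red_add red_mul R_mul)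
  hence "x - t \<in> M" using red_eq[OF x tR] by simp
  hence "c x - c t \<in> M" using M_c[of "x - t"] by (simp add: c_diff)
  moreover have ctR: "c t \<in> R" using tR c_R by blast
  ultimately have "red (c x) = red (c t)" using red_eq[OF c_R[OF x] ctR] by simp
  also have "c t = of_nat i - of_nat j * Y" using cY by (simp add: t_def c_add c_mul)
  also have "red \<dots> = a - b * w" using Y ij by (simp add: red_diff red_mul R_mul)
  also have "\<dots> = (a + b * w)^p" using ab Y(5) by (simp add: F.fadd F.fmul F.P_def)
  finally show ?thesis using ab by simp
qed


lemma det_cT: "det (conj_transpose c g) = c (det g)"
  by (simp add: det_2 conj_transpose_def c_diff c_mul)
lemma det_s: "det (s_form :: 'k^2^2) = -1"
  by (simp add: det_2 s_form_def)
lemma cT_mult: "conj_transpose c (A ** B) = conj_transpose c B ** conj_transpose c A"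
  by (simp add: vec_eq_iff conj_transpose_def matrix_matrix_mult_def sum_2 c_add c_mul mult.commute)
lemma mat_mat: "(mat x :: 'k^2^2) ** mat y = mat (x * y)"
  by (simp add: vec_eq_iff matrix_matrix_mult_def mat_def sum_2 forall_2)
lemma det_mat: "det (mat x :: 'k^2^2) = x^2"
  by (simp add: det_2 mat_def power2_eq_square)

lemma U11_iff: "g \<in> U11 c \<longleftrightarrow> det g \<noteq> 0 \<and> conj_transpose c g ** s_form ** g = s_form"
  by (simp add: U11_def invertible_det_nz)

lemma U11_det: assumes "g \<in> U11 c" shows "det g * c (det g) = 1"
proof -
  have "det (conj_transpose c g ** s_form ** g) = det (s_form :: 'k^2^2)" using assms by (simp add: U11_iff)
  thus ?thesis by (simp add: det_mul det_cT det_s mult.commute)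
qed

lemma U11_unit: assumes "g \<in> U11 c" shows "det g \<in> R" "det g \<notin> M" "red (det g) \<noteq> 0"
proof -
  have d: "det g * c (det g) = 1" by (rule U11_det[OF assms])
  hence n: "det g \<noteq> 0" by auto
  hence "v (det g) + v (c (det g)) = 0" using d vmul[of "det g" "c (det g)"] by simp
  hence "v (det g) = 0" using v_c[OF n] by simp
  thus "det g \<in> R" "det g \<notin> M" using n by (auto simp: val_ring_def max_ideal_def)
  thus "red (det g) \<noteq> 0" using red_0 by simp
qed

lemma U11_mul: assumes "g \<in> U11 c" "h \<in> U11 c" shows "g ** h \<in> U11 c"
proof -
  have "conj_transpose c (g ** h) ** s_form ** (g ** h)
      = conj_transpose c h ** (conj_transpose c g ** s_form ** g) ** h"
    by (simp add: cT_mult matrix_mul_assoc)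
  also have "\<dots> = s_form" using assms by (simp add: U11_iff)
  finally show ?thesis using assms by (simp add: U11_iff det_mul)
qed

lemma U11_inv: assumes g: "g \<in> U11 c"
  shows "matrix_inv g \<in> U11 c" "det (matrix_inv g) = inverse (det g)"
proof -
  have "invertible g" using g by (simp add: U11_def)
  hence "g ** matrix_inv g = mat 1 \<and> matrix_inv g ** g = mat 1"
    unfolding invertible_def matrix_inv_def by (rule someI_ex)
  hence gi: "g ** matrix_inv g = mat 1" "matrix_inv g ** g = mat 1" by auto
  have "det g * det (matrix_inv g) = 1" using arg_cong[OF gi(1), of det] by (simp add: det_mul)
  thus di: "det (matrix_inv g) = inverse (det g)" by (metis inverse_unique)
  have cm: "conj_transpose c (mat 1 :: 'k^2^2) = mat 1" by (simp add: vec_eq_iff conj_transpose_def mat_def)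
  have "conj_transpose c (matrix_inv g) ** s_form ** matrix_inv g
     = conj_transpose c (matrix_inv g) ** (conj_transpose c g ** s_form ** g) ** matrix_inv g"
    using g by (simp add: U11_iff)
  also have "\<dots> = conj_transpose c (g ** matrix_inv g) ** s_form ** (g ** matrix_inv g)"
    by (simp add: cT_mult matrix_mul_assoc)
  also have "\<dots> = s_form" using gi cm by simp
  finally show "matrix_inv g \<in> U11 c" using di U11_det[OF g] by (auto simp: U11_iff)
qed

lemma mat_U11: assumes "x * c x = 1" shows "(mat x :: 'k^2^2) \<in> U11 c"
proof -
  have "x \<noteq> 0" using assms by auto
  moreover have "conj_transpose c (mat x :: 'k^2^2) ** s_form ** mat x = s_form"
    using assms by (simp add: vec_eq_iff conj_transpose_def matrix_matrix_mult_def mat_def s_form_def sum_2 forall_2 mult.commute)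
  ultimately show ?thesis by (simp add: U11_iff det_mat)
qed

definition dg :: "'k \<Rightarrow> 'k^2^2" where
  "dg B = (\<chi> i j. if i = j then (if i = 1 then B else inverse (c B)) else 0)"

lemma dg_U11: assumes "B \<noteq> 0" shows "dg B \<in> U11 c" "det (dg B) = B * inverse (c B)"
proof -
  show d: "det (dg B) = B * inverse (c B)" by (simp add: det_2 dg_def)
  have "conj_transpose c (dg B) ** s_form ** dg B = s_form"
    using assms by (simp add: vec_eq_iff conj_transpose_def matrix_matrix_mult_def dg_def s_form_def sum_2 forall_2 c_inv)
  thus "dg B \<in> U11 c" using d assms by (simp add: U11_iff)
qed


lemma part1: "(\<lambda>g. red (det g)) ` U11 c = U1_res p"
proof
  show "(\<lambda>g. red (det g)) ` U11 c \<subseteq> U1_res p"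
  proof clarify
    fix g assume g: "g \<in> U11 c"
    note u = U11_unit[OF g]
    have "red (det g * c (det g)) = 1" using U11_det[OF g] by simp
    hence "red (det g) * red (det g) ^ p = 1" using u c_R[OF u(1)] frob[OF u(1)] by (simp add: red_mul)
    hence "red (det g) ^ (p + 1) = 1" by (simp add: power_Suc)
    thus "red (det g) \<in> U1_res p" using u by (simp add: U1_res_def)
  qed
next
  show "U1_res p \<subseteq> (\<lambda>g. red (det g)) ` U11 c"
  proof
    fix a :: 'f assume "a \<in> U1_res p"
    hence a: "a \<noteq> 0" "a^(p+1) = 1" by (auto simp: U1_res_def)
    have "(inverse a)^(p+1) = 1" using power_inverse[of a "p+1"] a(2) by (metis inverse_1)
    moreover have "inverse a \<noteq> 0" using a by simp
    ultimately have "inverse a \<noteq> 0 \<and> (inverse a)^(p+1) = 1" by blast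
    hence "inverse a \<in> (\<lambda>b::'f. b^(p-1)) ` (UNIV - {0})" using F.pow_surj by simp
    then obtain b :: 'f where b0: "b \<in> UNIV - {0}" "inverse a = b^(p-1)" by blast
    hence b: "b \<noteq> 0" "b^(p-1) = inverse a" by auto
    obtain B where B: "B \<in> R" "red B = b" using red_surj by (metis UNIV_I imageE)
    have BM: "B \<notin> M" using B b red_0 by auto
    hence B0: "B \<noteq> 0" by (auto simp: max_ideal_def)
    have cBR: "c B \<in> R" "c B \<notin> M" using B BM c_R M_c by auto
    have "red (det (dg B)) = red B * red (inverse (c B))" using dg_U11[OF B0] B cBR unit_R[OF cBR]
      by (simp add: red_mul)
    also have "\<dots> = b * inverse (b ^ p)" using red_inv[OF cBR] frob[OF B(1)] B by simp
    also have "b ^ p = b^(p-1) * b" using power_Suc2[of b "p-1"] p_pos by simp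
    also have "b * inverse (b^(p-1) * b) = a" using a b by (simp add: field_simps)
    finally show "a \<in> (\<lambda>g. red (det g)) ` U11 c" using dg_U11[OF B0] by (metis b(2) image_eqI)
  qed
qed

lemma K0_sub: "{g \<in> U11 c. red (det g) = 1} \<subseteq> G0 v c"
proof clarify
  fix g assume g: "g \<in> U11 c" "red (det g) = 1"
  define D where "D = det g"
  note u = U11_unit[OF g(1)]
  have DR: "D \<in> R" using u by (simp add: D_def)
  have "D - 1 \<in> M" using red_eq[OF DR R_1] g by (simp add: D_def)
  hence "pw 1 (1^2 - D)" using M_pw by (metis minus_diff_eq power_one pw_neg)
  then obtain a where a: "a^2 = D" "pw 1 (a - 1)"
    using hensel[of D 1] DR red_0[of 1] by auto
  have a1: "a - 1 \<in> M" using a M_pw by simp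
  hence aR: "a \<in> R" using M_R R_add[of "a - 1" 1] by simp
  have ra: "red a = 1" using red_eq[OF aR R_1] a1 by simp
  have D0: "D \<noteq> 0" using u by (auto simp: D_def max_ideal_def)
  hence a0: "a \<noteq> 0" using a by auto
  have "(a * c a)^2 = D * c D" using a by (simp add: power_mult_distrib c_pow[symmetric])
  also have "\<dots> = 1" using U11_det[OF g(1)] by (simp add: D_def)
  finally have "a * c a = 1 \<or> a * c a = -1" by (simp add: power2_eq_1_iff)
  moreover have "red (a * c a) = 1" using aR c_R[OF aR] frob[OF aR] ra by (simp add: red_mul)
  moreover have "red (-1::'k) \<noteq> 1"
  proof
    assume "red (-1::'k) = 1"
    hence "(-1::'f) = 1" using red_neg[of 1] by simp
    hence "(2::'f) = 0" by (metis add_eq_0_iff2 one_add_one)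
    thus False using two_F by simp
  qed
  ultimately have ac: "a * c a = 1" by auto
  hence aU: "a \<in> U1_1 v c" using a1 by (simp add: U1_1_def)
  have "inverse a * c (inverse a) = inverse (a * c a)" by (simp add: c_inv inverse_mult_distrib)
  hence "inverse a * c (inverse a) = 1" using ac by simp
  hence mi: "(mat (inverse a) :: 'k^2^2) \<in> U11 c" by (rule mat_U11)
  define h where "h = mat (inverse a) ** g"
  have hU: "h \<in> U11 c" using U11_mul[OF mi g(1)] by (simp add: h_def)
  have "det h = (inverse a)^2 * D" by (simp add: h_def det_mul det_mat D_def)
  also have "\<dots> = 1" using a a0 D0 by (simp add: field_simps)
  finally have hS: "h \<in> SU11 c" using hU by (simp add: SU11_def)
  have ge: "g = mat a ** h" using a0 by (simp add: h_def matrix_mul_assoc mat_mat)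
  show "g \<in> G0 v c" unfolding G0_def gen_subgroup_def
  proof (rule InterI, clarify)
    fix H assume H: "SU11 c \<union> {mat a |a. a \<in> U1_1 v c} \<subseteq> H" "\<forall>x\<in>H. \<forall>y\<in>H. x ** y \<in> H"
    have "mat a \<in> H" using H(1) aU by blast
    moreover have "h \<in> H" using H(1) hS by blast
    ultimately show "g \<in> H" using H(2) ge by blast
  qed
qed

lemma G0_sub: "G0 v c \<subseteq> {g \<in> U11 c. red (det g) = 1}"
proof -
  let ?K = "{g \<in> U11 c. red (det g) = 1}"
  have "?K \<in> {H. SU11 c \<union> {mat a |a. a \<in> U1_1 v c} \<subseteq> H \<and> mat 1 \<in> H \<and>
       (\<forall>a\<in>H. \<forall>b\<in>H. a ** b \<in> H) \<and> (\<forall>a\<in>H. matrix_inv a \<in> H)}"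
  proof (rule CollectI, intro conjI)
    show "SU11 c \<union> {mat a |a. a \<in> U1_1 v c} \<subseteq> ?K"
    proof
      fix x assume "x \<in> SU11 c \<union> {mat a |a. a \<in> U1_1 v c}"
      then consider "x \<in> SU11 c" | a where "a \<in> U1_1 v c" "x = mat a" by blast
      thus "x \<in> ?K"
      proof cases
        case 1 thus ?thesis by (simp add: SU11_def)
      next
        case 2
        have ac: "a * c a = 1" and a1: "a - 1 \<in> M" using 2 by (auto simp: U1_1_def)
        have aR: "a \<in> R" using a1 M_R R_add[of "a - 1" 1] by simp
        have "red a = 1" using red_eq[OF aR R_1] a1 by simp
        thus ?thesis using 2 mat_U11[OF ac] aR by (simp add: det_mat red_pow)
      qed
    qed
  next
    show "mat 1 \<in> ?K" using mat_U11[of 1] by simp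
  next
    show "\<forall>x\<in>?K. \<forall>y\<in>?K. x ** y \<in> ?K"
    proof (intro ballI)
      fix x y assume x: "x \<in> ?K" and y: "y \<in> ?K"
      thus "x ** y \<in> ?K" using U11_mul U11_unit[of x] U11_unit[of y] by (simp add: det_mul red_mul)
    qed
  next
    show "\<forall>x\<in>?K. matrix_inv x \<in> ?K"
    proof
      fix x assume x: "x \<in> ?K"
      note u = U11_unit[of x]
      show "matrix_inv x \<in> ?K" using x U11_inv[of x] u by (simp add: red_inv)
    qed
  qed
  thus ?thesis unfolding G0_def gen_subgroup_def by (rule Inter_lower)
qed

lemma main: "(\<lambda>g. red (det g)) ` U11 c = U1_res p \<and> {g \<in> U11 c. red (det g) = 1} = G0 v c"
  using part1 K0_sub G0_sub by blast

end

theorem lemma5p7: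
  fixes p :: nat and v :: "'k::field_char_0 \<Rightarrow> int" and c :: "'k \<Rightarrow> 'k"
    and red :: "'k \<Rightarrow> 'f::{field,finite}"
  assumes "prime p" and "odd p"
    and "is_Qp2 p v c red"
  shows "(\<lambda>g. red (det g)) ` U11 c = U1_res p
    \<and> {g \<in> U11 c. red (det g) = 1} = G0 v c"
proof -
  interpret qp2 p v c red using assms by unfold_locales
  show ?thesis by (rule main)
qed


end
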